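(* Let $m\ge 2$ be fixed, $\gamma=\frac{0.29}{m-1}$, and let $R_1,\dots,R_n$ be i.i.d. random interest profiles as described in the context. Let $N_f$ be the number of indices $i$ such that (1) $\angle(R_i,D)\le\arccos\gamma$, and (2) $\angle(R_i,S)\le 3\pi/8$. Then for every fixed $\nu>0$ there is a constant $c>0$ such that for all sufficiently large $n$, $$\Pr\Big[N_f\ge (1-\nu)\frac{n}{4(m-1)}\Big]\ge 1-e^{-cn}.$$
   Context: Interest profiles are unit vectors in the closed positive orthant of the unit sphere of $\mathbb{R}^m$; $\angle(X,Y)$ is the angle between two profiles, $\cos\angle(X,Y)=\langle X,Y\rangle$. $S=(1,0,\dots,0)$ and $D=(0,1,0,\dots,0)$. Each $R_i$ is drawn independently as follows: the angle $\alpha_i=\angle(S,R_i)$ is uniform on $[0,\pi/2]$, and given $\alpha_i$, $R_i$ is uniform among unit vectors of the positive orthant making angle $\alpha_i$ with $S$. *)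

theory Defs
  imports "HOL-Probability.Probability"
begin

text \<open>Interest profiles in R^m are represented as functions nat => real on the
  index set {..<m} (coordinate 0 corresponds to the first coordinate).\<close>

definition inner_m :: "nat \<Rightarrow> (nat \<Rightarrow> real) \<Rightarrow> (nat \<Rightarrow> real) \<Rightarrow> real" where
  "inner_m m x y = (\<Sum>i<m. x i * y i)"

definition angle_m :: "nat \<Rightarrow> (nat \<Rightarrow> real) \<Rightarrow> (nat \<Rightarrow> real) \<Rightarrow> real" where
  "angle_m m x y = arccos (inner_m m x y)"

definition S_vec :: "nat \<Rightarrow> real" where
  "S_vec = (\<lambda>i. if i = 0 then 1 else 0)"

definition D_vec :: "nat \<Rightarrow> real" where
  "D_vec = (\<lambda>i. if i = 1 then 1 else 0)"

text \<open>Uniform (normalised surface) distribution on the positive orthant of the unit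
  sphere of R^{m-1}, the coordinates being indexed by {1..<m}, realised as the
  cone measure: push forward of the uniform distribution on the positive part
  of the unit ball under y |-> y / |y|.\<close>

definition orth_ball :: "nat \<Rightarrow> (nat \<Rightarrow> real) set" where
  "orth_ball m = {y \<in> space (PiM {1..<m} (\<lambda>_. lborel)).
                   (\<forall>i\<in>{1..<m}. 0 \<le> y i) \<and> (\<Sum>i\<in>{1..<m}. (y i)\<^sup>2) \<le> 1}"

definition sphere_orth_dist :: "nat \<Rightarrow> (nat \<Rightarrow> real) measure" where
  "sphere_orth_dist m =
     distr (uniform_measure (PiM {1..<m} (\<lambda>_. lborel)) (orth_ball m))
           (PiM {1..<m} (\<lambda>_. lborel))
           (\<lambda>y. \<lambda>i\<in>{1..<m}. y i / sqrt (\<Sum>j\<in>{1..<m}. (y j)\<^sup>2))"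

text \<open>Distribution of a random profile R: alpha uniform on [0, pi/2], and given alpha,
  R = cos alpha * S + sin alpha * V with V uniform on the positive orthant of
  the unit sphere of the orthogonal complement of S; this is exactly the uniform
  distribution on the unit vectors of the positive orthant at angle alpha from S.\<close>

definition profile_dist :: "nat \<Rightarrow> (nat \<Rightarrow> real) measure" where
  "profile_dist m =
     distr (uniform_measure lborel {0..pi/2} \<Otimes>\<^sub>M sphere_orth_dist m)
           (PiM {..<m} (\<lambda>_. lborel))
           (\<lambda>(a, v). \<lambda>i\<in>{..<m}. if i = 0 then cos a else sin a * v i)"

definition profiles_dist :: "nat \<Rightarrow> nat \<Rightarrow> (nat \<Rightarrow> nat \<Rightarrow> real) measure" where
  "profiles_dist m n = PiM {..<n} (\<lambda>_. profile_dist m)"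

definition N_f :: "nat \<Rightarrow> nat \<Rightarrow> (nat \<Rightarrow> nat \<Rightarrow> real) \<Rightarrow> nat" where
  "N_f m n R = card {i \<in> {..<n}.
       angle_m m (R i) D_vec \<le> arccos (0.29 / (real m - 1)) \<and>
       angle_m m (R i) S_vec \<le> 3 * pi / 8}"

end

theory Submission
  imports Defs
begin



lemma arccos_outside: assumes "\<not> (-1 \<le> y \<and> y \<le> (1::real))"
  shows "arccos y = The (\<lambda>x::real. False)"
proof -
  have "\<And>x. \<not> (0 \<le> x \<and> x \<le> pi \<and> cos x = y)" using assms cos_ge_minus_one cos_le_one by metis
  then show ?thesis unfolding arccos_def by metis
qed

lemma borel_measurable_arccos[measurable]: "arccos \<in> borel_measurable borel"
proof -
  have "arccos = (\<lambda>x. if x \<in> {-1..1} then arccos x else The (\<lambda>x::real. False))"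
    using arccos_outside by (auto simp: fun_eq_iff)
  also have "\<dots> \<in> borel_measurable borel"
    by (rule borel_measurable_continuous_on_if) (auto intro: continuous_on_arccos' continuous_on_const)
  finally show ?thesis .
qed

lemma inner_D: "m \<ge> 2 \<Longrightarrow> inner_m m x D_vec = x 1"
  by (simp add: inner_m_def D_vec_def if_distrib sum.delta cong: if_cong)

lemma inner_S: "m \<ge> 2 \<Longrightarrow> inner_m m x S_vec = x 0"
  by (simp add: inner_m_def S_vec_def if_distrib sum.delta cong: if_cong)

definition Aset :: "nat \<Rightarrow> (nat \<Rightarrow> real) set" where
  "Aset m = {R \<in> space (PiM {..<m} (\<lambda>_. lborel)).
       arccos (R 1) \<le> arccos (0.29 / (real m - 1)) \<and> arccos (R 0) \<le> 3 * pi / 8}"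

lemma Aset_sets: "m \<ge> 2 \<Longrightarrow> Aset m \<in> sets (PiM {..<m} (\<lambda>_. lborel))"
  unfolding Aset_def by measurable

abbreviation LL :: "nat \<Rightarrow> (nat \<Rightarrow> real) measure" where
  "LL m \<equiv> PiM {1..<m} (\<lambda>_. lborel)"

lemma orth_ball_sets[measurable]: "orth_ball m \<in> sets (LL m)"
  unfolding orth_ball_def by measurable

interpretation psf: product_sigma_finite "\<lambda>_::nat. lborel :: real measure" by standard

lemma orth_ball_fin: "emeasure (LL m) (orth_ball m) \<le> 1"
proof -
  have "orth_ball m \<subseteq> PiE {1..<m} (\<lambda>_. {0..1})"
  proof
    fix y assume y: "y \<in> orth_ball m"
    then have sp: "y \<in> PiE {1..<m} (\<lambda>_. UNIV)" by (simp add: orth_ball_def space_PiM)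
    show "y \<in> PiE {1..<m} (\<lambda>_. {0..1})"
    proof (rule PiE_I)
      fix i assume i: "i \<in> {1..<m}"
      have "(y i)^2 \<le> (\<Sum>j\<in>{1..<m}. (y j)^2)"
        using i by (intro member_le_sum) auto
      also have "\<dots> \<le> 1" using y by (simp add: orth_ball_def)
      finally have "(y i)^2 \<le> 1" .
      then have "y i \<le> 1" by (metis abs_le_square_iff abs_of_nonneg power_one zero_le_one abs_le_D1)
      moreover have "0 \<le> y i" using y i by (simp add: orth_ball_def)
      ultimately show "y i \<in> {0..1}" by simp
    next
      fix i assume "i \<notin> {1..<m}" then show "y i = undefined" using sp by (auto simp: PiE_def extensional_def)
    qed
  qed
  then have "emeasure (LL m) (orth_ball m) \<le> emeasure (LL m) (PiE {1..<m} (\<lambda>_. {0..1}))"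
    by (intro emeasure_mono) (auto intro: sets_PiM_I_finite)
  also have "\<dots> = 1" by (subst psf.emeasure_PiM) auto
  finally show ?thesis .
qed

lemma orth_ball_pos: assumes "m \<ge> 2" shows "emeasure (LL m) (orth_ball m) > 0"
proof -
  define c where "c = 1 / (real m - 1)"
  have c0: "c > 0" using assms by (simp add: c_def)
  have "PiE {1..<m} (\<lambda>_. {0..c}) \<subseteq> orth_ball m"
  proof
    fix y assume y: "y \<in> PiE {1..<m} (\<lambda>_. {0..c})"
    have "(\<Sum>j\<in>{1..<m}. (y j)^2) \<le> (\<Sum>j\<in>{1..<m}. c^2)"
      using y by (intro sum_mono power_mono) auto
    also have "\<dots> = (real m - 1) * c^2" using assms by (simp add: of_nat_diff)
    also have "\<dots> = c" using assms by (simp add: c_def power2_eq_square)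
    also have "\<dots> \<le> 1" using assms by (simp add: c_def)
    finally show "y \<in> orth_ball m" using y by (auto simp: orth_ball_def space_PiM PiE_def Pi_def)
  qed
  then have "emeasure (LL m) (PiE {1..<m} (\<lambda>_. {0..c})) \<le> emeasure (LL m) (orth_ball m)"
    by (rule emeasure_mono[OF _ orth_ball_sets])
  moreover have "emeasure (LL m) (PiE {1..<m} (\<lambda>_. {0..c})) = ennreal c ^ (m - 1)"
    using c0 by (subst psf.emeasure_PiM) auto
  moreover have "ennreal c ^ (m - 1) > 0" using c0 by (simp add: ennreal_power)
  ultimately show ?thesis by order
qed

definition sw :: "nat \<Rightarrow> nat \<Rightarrow> nat" where
  "sw j i = (if i = 1 then j else if i = j then 1 else i)"

lemma sw_sw[simp]: "sw j (sw j i) = i" by (simp add: sw_def)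

lemma sw_in: "m \<ge> 2 \<Longrightarrow> j \<in> {1..<m} \<Longrightarrow> i \<in> {1..<m} \<Longrightarrow> sw j i \<in> {1..<m}"
  by (auto simp: sw_def)

lemma sw_bij: "m \<ge> 2 \<Longrightarrow> j \<in> {1..<m} \<Longrightarrow> bij_betw (sw j) {1..<m} {1..<m}"
  by (rule bij_betwI[where g="sw j"]) (auto simp: sw_def)

lemma sw_ball: "m \<ge> 2 \<Longrightarrow> j \<in> {1..<m} \<Longrightarrow> (\<forall>i\<in>{1..<m}. P (sw j i)) \<longleftrightarrow> (\<forall>i\<in>{1..<m}. P i)"
  by (metis sw_in sw_sw)

lemma sw_sum: "m \<ge> 2 \<Longrightarrow> j \<in> {1..<m} \<Longrightarrow> (\<Sum>i\<in>{1..<m}. f (sw j i)) = (\<Sum>i\<in>{1..<m}. f i)"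
  using sum.reindex_bij_betw[OF sw_bij, of m j f] by simp

lemma sw_prod: "m \<ge> 2 \<Longrightarrow> j \<in> {1..<m} \<Longrightarrow> (\<Prod>i\<in>{1..<m}. f (sw j i)) = (\<Prod>i\<in>{1..<m}. f i)"
  using prod.reindex_bij_betw[OF sw_bij, of m j f] by simp

definition Tsw :: "nat \<Rightarrow> nat \<Rightarrow> (nat \<Rightarrow> real) \<Rightarrow> (nat \<Rightarrow> real)" where
  "Tsw m j y = (\<lambda>i\<in>{1..<m}. y (sw j i))"

lemma Tsw_meas: assumes "m \<ge> 2" "j \<in> {1..<m}" shows "Tsw m j \<in> LL m \<rightarrow>\<^sub>M LL m"
  unfolding Tsw_def
  by (rule measurable_restrict) (rule measurable_component_singleton[OF sw_in[OF assms]])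

lemma Tsw_distr: assumes m: "m \<ge> 2" and j: "j \<in> {1..<m}"
  shows "distr (LL m) (LL m) (Tsw m j) = LL m"
proof (rule psf.PiM_eqI)
  fix A :: "nat \<Rightarrow> real set" assume A: "\<And>i. i \<in> {1..<m} \<Longrightarrow> A i \<in> sets lborel"
  have pre: "Tsw m j -` PiE {1..<m} A \<inter> space (LL m) = PiE {1..<m} (\<lambda>i. A (sw j i))"
  proof -
    have "y \<in> Tsw m j -` PiE {1..<m} A \<inter> space (LL m) \<longleftrightarrow> y \<in> PiE {1..<m} (\<lambda>i. A (sw j i))" for y
    proof -
      have "y \<in> Tsw m j -` PiE {1..<m} A \<longleftrightarrow> (\<forall>i\<in>{1..<m}. y (sw j i) \<in> A i)"
        by (auto simp: Tsw_def PiE_def Pi_def)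
      also have "\<dots> \<longleftrightarrow> (\<forall>i\<in>{1..<m}. y (sw j (sw j i)) \<in> A (sw j i))"
        using sw_ball[OF m j, of "\<lambda>i. y (sw j i) \<in> A i"] by simp
      finally show ?thesis by (auto simp: space_PiM PiE_def Pi_def)
    qed
    then show ?thesis by blast
  qed
  have "emeasure (distr (LL m) (LL m) (Tsw m j)) (PiE {1..<m} A)
        = emeasure (LL m) (Tsw m j -` PiE {1..<m} A \<inter> space (LL m))"
    using A by (intro emeasure_distr[OF Tsw_meas[OF m j]] sets_PiM_I_finite) auto
  also have "\<dots> = emeasure (LL m) (PiE {1..<m} (\<lambda>i. A (sw j i)))"
    by (simp only: pre)
  also have "\<dots> = (\<Prod>i\<in>{1..<m}. emeasure lborel (A (sw j i)))"
    using A sw_in[OF m j] by (subst psf.emeasure_PiM) auto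
  also have "\<dots> = (\<Prod>i\<in>{1..<m}. emeasure lborel (A i))"
    by (rule sw_prod[OF m j])
  finally show "emeasure (distr (LL m) (LL m) (Tsw m j)) (PiE {1..<m} A) = (\<Prod>i\<in>{1..<m}. emeasure lborel (A i))" .
qed auto

lemma Tsw_emeasure: assumes m: "m \<ge> 2" and j: "j \<in> {1..<m}" and B: "B \<in> sets (LL m)"
  shows "emeasure (LL m) (Tsw m j -` B \<inter> space (LL m)) = emeasure (LL m) B"
proof -
  have "emeasure (LL m) B = emeasure (distr (LL m) (LL m) (Tsw m j)) B" using Tsw_distr[OF m j] by simp
  also have "\<dots> = emeasure (LL m) (Tsw m j -` B \<inter> space (LL m))"
    by (rule emeasure_distr[OF Tsw_meas[OF m j] B])
  finally show ?thesis by simp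
qed

definition Fj :: "nat \<Rightarrow> nat \<Rightarrow> (nat \<Rightarrow> real) set" where
  "Fj m j = {y \<in> orth_ball m. \<forall>k\<in>{1..<m}. y k \<le> y j}"

lemma comp_meas: "k \<in> I \<Longrightarrow> (\<lambda>y. y k) \<in> borel_measurable (PiM I (\<lambda>_. lborel))"
  using measurable_component_singleton[of k I "\<lambda>_. lborel"] by simp

lemma Fj_sets: assumes j: "j \<in> {1..<m}" shows "Fj m j \<in> sets (LL m)"
proof -
  have eq: "Fj m j = orth_ball m \<inter> (space (LL m) \<inter> (\<Inter>k\<in>{1..<m}. {y \<in> space (LL m). y k \<le> y j}))"
    by (auto simp: Fj_def orth_ball_def)
  have "{y \<in> space (LL m). y k \<le> y j} \<in> sets (LL m)" if k: "k \<in> {1..<m}" for k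
    using comp_meas[OF k] comp_meas[OF j] by measurable
  then have "(\<Inter>k\<in>{1..<m}. {y \<in> space (LL m). y k \<le> y j}) \<in> sets (LL m)"
    using j by (intro sets.finite_INT) auto
  then show ?thesis unfolding eq by (intro sets.Int orth_ball_sets sets.top)
qed

lemma Fj_pre: assumes m: "m \<ge> 2" and j: "j \<in> {1..<m}"
  shows "Tsw m j -` Fj m j \<inter> space (LL m) = Fj m 1"
proof -
  have swj: "sw j j = 1" by (simp add: sw_def)
  have "y \<in> Tsw m j -` Fj m j \<longleftrightarrow> y \<in> Fj m 1" if y: "y \<in> space (LL m)" for y
  proof -
    have sp: "Tsw m j y \<in> space (LL m)" by (rule measurable_space[OF Tsw_meas[OF m j] y])
    have a1: "(\<forall>i\<in>{1..<m}. 0 \<le> Tsw m j y i) \<longleftrightarrow> (\<forall>i\<in>{1..<m}. 0 \<le> y (sw j i))"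
      by (simp add: Tsw_def)
    have a2: "(\<Sum>i\<in>{1..<m}. (Tsw m j y i)\<^sup>2) = (\<Sum>i\<in>{1..<m}. (y (sw j i))\<^sup>2)"
      by (simp add: Tsw_def)
    have o1: "Tsw m j y \<in> orth_ball m \<longleftrightarrow> (\<forall>i\<in>{1..<m}. 0 \<le> Tsw m j y i) \<and> (\<Sum>i\<in>{1..<m}. (Tsw m j y i)\<^sup>2) \<le> 1"
      using sp unfolding orth_ball_def by simp
    have o2: "y \<in> orth_ball m \<longleftrightarrow> (\<forall>i\<in>{1..<m}. 0 \<le> y i) \<and> (\<Sum>i\<in>{1..<m}. (y i)\<^sup>2) \<le> 1"
      using y unfolding orth_ball_def by simp
    have ob: "Tsw m j y \<in> orth_ball m \<longleftrightarrow> y \<in> orth_ball m"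
      unfolding o1 o2 a1 a2 sw_ball[OF m j, of "\<lambda>i. 0 \<le> y i"] sw_sum[OF m j, of "\<lambda>i. (y i)\<^sup>2"] ..
    have "(\<forall>k\<in>{1..<m}. Tsw m j y k \<le> Tsw m j y j) \<longleftrightarrow> (\<forall>k\<in>{1..<m}. y (sw j k) \<le> y 1)"
      using j swj by (simp add: Tsw_def)
    also have "\<dots> \<longleftrightarrow> (\<forall>k\<in>{1..<m}. y k \<le> y 1)"
      by (rule sw_ball[OF m j])
    finally have "(\<forall>k\<in>{1..<m}. Tsw m j y k \<le> Tsw m j y j) \<longleftrightarrow> (\<forall>k\<in>{1..<m}. y k \<le> y 1)" .
    then show ?thesis using ob unfolding Fj_def vimage_def mem_Collect_eq by blast
  qed
  note H = this
  have sub: "Fj m 1 \<subseteq> space (LL m)" by (auto simp: Fj_def orth_ball_def)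
  show ?thesis
  proof (rule set_eqI)
    fix y show "y \<in> Tsw m j -` Fj m j \<inter> space (LL m) \<longleftrightarrow> y \<in> Fj m 1"
      using H[of y] sub by blast
  qed
qed

lemma Fj_cover: assumes m: "m \<ge> 2" shows "orth_ball m \<subseteq> (\<Union>j\<in>{1..<m}. Fj m j)"
proof
  fix y assume y: "y \<in> orth_ball m"
  define M where "M = Max (y ` {1..<m})"
  have "M \<in> y ` {1..<m}" unfolding M_def using m by (intro Max_in) auto
  then obtain j where j: "j \<in> {1..<m}" "y j = M" by auto
  have "\<forall>k\<in>{1..<m}. y k \<le> y j" using j unfolding M_def by auto
  then show "y \<in> (\<Union>j\<in>{1..<m}. Fj m j)" using j y by (auto simp: Fj_def)
qed

lemma F1_big: assumes m: "m \<ge> 2"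
  shows "emeasure (LL m) (orth_ball m) \<le> of_nat (m - 1) * emeasure (LL m) (Fj m 1)"
proof -
  have "emeasure (LL m) (orth_ball m) \<le> emeasure (LL m) (\<Union>j\<in>{1..<m}. Fj m j)"
    using Fj_cover[OF m] Fj_sets by (intro emeasure_mono) auto
  also have "\<dots> \<le> (\<Sum>j\<in>{1..<m}. emeasure (LL m) (Fj m j))"
    using Fj_sets by (intro emeasure_subadditive_finite) auto
  also have "\<dots> = (\<Sum>j\<in>{1..<m}. emeasure (LL m) (Fj m 1))"
  proof (rule sum.cong)
    fix j assume j: "j \<in> {1..<m}"
    show "emeasure (LL m) (Fj m j) = emeasure (LL m) (Fj m 1)"
      using Tsw_emeasure[OF m j Fj_sets[OF j]] Fj_pre[OF m j] by simp
  qed simp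
  also have "\<dots> = of_nat (m - 1) * emeasure (LL m) (Fj m 1)" by simp
  finally show ?thesis .
qed

declare One_nat_def[simp del]

definition gmap :: "nat \<Rightarrow> (nat \<Rightarrow> real) \<Rightarrow> (nat \<Rightarrow> real)" where
  "gmap m y = (\<lambda>i\<in>{1..<m}. y i / sqrt (\<Sum>j\<in>{1..<m}. (y j)\<^sup>2))"

lemma gmap_meas: "gmap m \<in> LL m \<rightarrow>\<^sub>M LL m"
  unfolding gmap_def
proof (rule measurable_restrict)
  fix i assume i: "i \<in> {1..<m}"
  have [measurable]: "(\<lambda>y. \<Sum>j\<in>{1..<m}. (y j)\<^sup>2) \<in> borel_measurable (LL m)"
    by (intro borel_measurable_sum borel_measurable_power comp_meas)
  have [measurable]: "(\<lambda>y. y i) \<in> borel_measurable (LL m)" using comp_meas[OF i] .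
  show "(\<lambda>y. y i / sqrt (\<Sum>j\<in>{1..<m}. (y j)\<^sup>2)) \<in> LL m \<rightarrow>\<^sub>M lborel"
    unfolding measurable_lborel1 by measurable
qed

lemma sphere_eq: "sphere_orth_dist m = distr (uniform_measure (LL m) (orth_ball m)) (LL m) (gmap m)"
  unfolding sphere_orth_dist_def gmap_def ..

lemma ball_fm: "orth_ball m \<in> fmeasurable (LL m)"
proof -
  have "emeasure (LL m) (orth_ball m) < \<infinity>" using orth_ball_fin[of m] by (rule le_less_trans) simp
  then show ?thesis by (intro fmeasurableI orth_ball_sets)
qed

lemma U_prob: assumes "m \<ge> 2" shows "prob_space (uniform_measure (LL m) (orth_ball m))"
  using orth_ball_pos[OF assms] orth_ball_fin[of m]
  by (intro prob_space_uniform_measure) (auto simp: top_unique)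

lemma gmap_measU: "gmap m \<in> uniform_measure (LL m) (orth_ball m) \<rightarrow>\<^sub>M LL m"
  using gmap_meas by (simp add: measurable_cong_sets[OF sets_uniform_measure refl])

lemma V_prob: assumes "m \<ge> 2" shows "prob_space (sphere_orth_dist m)"
  unfolding sphere_eq by (intro prob_space.prob_space_distr U_prob[OF assms] gmap_measU)

definition Ev :: "nat \<Rightarrow> (nat \<Rightarrow> real) set" where
  "Ev m = {v \<in> space (LL m). 1 / (real m - 1) \<le> v 1 \<and> v 1 \<le> 1}"

lemma Ev_sets: "m \<ge> 2 \<Longrightarrow> Ev m \<in> sets (LL m)"
proof -
  assume "m \<ge> 2"
  then have [measurable]: "(\<lambda>y. y 1) \<in> borel_measurable (LL m)" by (intro comp_meas) auto
  show ?thesis unfolding Ev_def by measurable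
qed

lemma sqrt_le_self': "(x::real) \<ge> 1 \<Longrightarrow> sqrt x \<le> x"
proof -
  assume x: "x \<ge> 1"
  then have s: "sqrt x \<ge> 1" by simp
  have "sqrt x = sqrt x * 1" by simp
  also have "\<dots> \<le> sqrt x * sqrt x" using s by (intro mult_left_mono) auto
  also have "\<dots> = x" using x by simp
  finally show ?thesis .
qed

lemma point_good: assumes m: "m \<ge> 2" and y: "y \<in> Fj m 1" and nz: "y \<notin> PiE {1..<m} (\<lambda>_. {0})"
  shows "gmap m y \<in> Ev m"
proof -
  have sp: "y \<in> space (LL m)" and nn: "\<And>i. i \<in> {1..<m} \<Longrightarrow> 0 \<le> y i"
    and mx: "\<And>k. k \<in> {1..<m} \<Longrightarrow> y k \<le> y 1"
    using y by (auto simp: Fj_def orth_ball_def)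
  have one: "(1::nat) \<in> {1..<m}" using m by auto
  have "\<exists>k\<in>{1..<m}. y k \<noteq> 0"
  proof (rule ccontr)
    assume "\<not> (\<exists>k\<in>{1..<m}. y k \<noteq> 0)"
    then have "y \<in> PiE {1..<m} (\<lambda>_. {0})" using sp by (auto simp: space_PiM PiE_def Pi_def extensional_def fun_eq_iff)
    with nz show False ..
  qed
  then obtain k where k: "k \<in> {1..<m}" "y k \<noteq> 0" by blast
  have y1pos: "y 1 > 0" using nn[OF k(1)] mx[OF k(1)] k(2) by linarith
  define s where "s = (\<Sum>j\<in>{1..<m}. (y j)\<^sup>2)"
  have s1: "(y 1)\<^sup>2 \<le> s" unfolding s_def using one by (intro member_le_sum) auto
  have s2: "s \<le> (real m - 1) * (y 1)\<^sup>2"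
  proof -
    have "s \<le> (\<Sum>j\<in>{1..<m}. (y 1)\<^sup>2)" unfolding s_def
      using nn mx by (intro sum_mono power_mono) auto
    also have "\<dots> = (real m - 1) * (y 1)\<^sup>2" using m by (simp add: of_nat_diff)
    finally show ?thesis .
  qed
  have spos: "s > 0" using s1 y1pos by (smt (verit) zero_less_power)
  have g1: "gmap m y 1 = y 1 / sqrt s" using one by (simp add: gmap_def s_def)
  have "y 1 \<le> sqrt s" using s1 y1pos by (simp add: real_le_rsqrt)
  then have le1: "y 1 / sqrt s \<le> 1" using spos by simp
  have m1: "real m - 1 \<ge> 1" using m by simp
  have "sqrt s \<le> sqrt ((real m - 1) * (y 1)\<^sup>2)" using s2 by simp
  also have "\<dots> = sqrt (real m - 1) * y 1" using y1pos by (simp add: real_sqrt_mult)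
  also have "\<dots> \<le> (real m - 1) * y 1"
    using m1 y1pos by (intro mult_right_mono sqrt_le_self') auto
  finally have "sqrt s \<le> (real m - 1) * y 1" .
  then have ge: "1 / (real m - 1) \<le> y 1 / sqrt s"
    using spos y1pos m1 by (simp add: field_simps)
  have "gmap m y \<in> space (LL m)" using measurable_space[OF gmap_meas sp] .
  then show ?thesis unfolding Ev_def using g1 le1 ge by simp
qed


lemma Z_null: assumes m: "m \<ge> 2" shows "PiE {1..<m} (\<lambda>_. {0::real}) \<in> null_sets (LL m)"
proof (rule null_setsI)
  have "emeasure (LL m) (PiE {1..<m} (\<lambda>_. {0::real})) = (\<Prod>i\<in>{1..<m}. emeasure lborel {0::real})"
    by (rule psf.emeasure_PiM) auto
  also have "\<dots> = 0" using m by (intro prod_zero) auto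
  finally show "emeasure (LL m) (PiE {1..<m} (\<lambda>_. {0::real})) = 0" .
qed (rule sets_PiM_I_finite, auto)

lemma V_Ev: assumes m: "m \<ge> 2"
  shows "measure (sphere_orth_dist m) (Ev m) \<ge> 1 / (real m - 1)"
proof -
  let ?U = "uniform_measure (LL m) (orth_ball m)"
  let ?G = "gmap m -` Ev m \<inter> space (LL m)"
  let ?Z = "PiE {1..<m} (\<lambda>_. {0::real})"
  have Gs: "?G \<in> sets (LL m)" using gmap_meas Ev_sets[OF m] by (rule measurable_sets)
  have bpos: "emeasure (LL m) (orth_ball m) \<noteq> 0" using orth_ball_pos[OF m] by simp
  have bfin: "emeasure (LL m) (orth_ball m) \<noteq> \<infinity>" using ball_fm[of m] by (simp add: fmeasurable_def)
  have "measure (sphere_orth_dist m) (Ev m) = measure ?U (gmap m -` Ev m \<inter> space ?U)"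
    unfolding sphere_eq by (rule measure_distr[OF gmap_measU]) (simp add: Ev_sets[OF m])
  also have "\<dots> = measure ?U ?G" by simp
  also have "\<dots> = measure (LL m) (orth_ball m \<inter> ?G) / measure (LL m) (orth_ball m)"
    by (rule measure_uniform_measure[OF bpos bfin Gs])
  finally have eq: "measure (sphere_orth_dist m) (Ev m) = measure (LL m) (orth_ball m \<inter> ?G) / measure (LL m) (orth_ball m)" .
  have sub: "Fj m 1 - ?Z \<subseteq> orth_ball m \<inter> ?G"
  proof
    fix y assume y: "y \<in> Fj m 1 - ?Z"
    then have "gmap m y \<in> Ev m" using point_good[OF m] by blast
    moreover have "y \<in> orth_ball m" using y by (auto simp: Fj_def)
    moreover then have "y \<in> space (LL m)" by (auto simp: orth_ball_def)
    ultimately show "y \<in> orth_ball m \<inter> ?G" by blast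
  qed
  have F1s: "Fj m 1 \<in> sets (LL m)" using m by (intro Fj_sets) auto
  have F1fm: "Fj m 1 \<in> fmeasurable (LL m)"
    by (rule fmeasurableI2[OF ball_fm _ F1s]) (auto simp: Fj_def)
  have bGfm: "orth_ball m \<inter> ?G \<in> fmeasurable (LL m)"
    by (rule fmeasurableI2[OF ball_fm]) (auto intro: sets.Int orth_ball_sets Gs)
  have "measure (LL m) (Fj m 1) = measure (LL m) (Fj m 1 - ?Z)"
    using F1s Z_null[OF m] by (simp add: measure_Diff_null_set)
  also have "\<dots> \<le> measure (LL m) (orth_ball m \<inter> ?G)"
    using sub bGfm F1s Z_null[OF m] by (intro measure_mono_fmeasurable) auto
  finally have F1le: "measure (LL m) (Fj m 1) \<le> measure (LL m) (orth_ball m \<inter> ?G)" .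
  have big: "measure (LL m) (orth_ball m) \<le> (real m - 1) * measure (LL m) (Fj m 1)"
  proof -
    have "ennreal (measure (LL m) (orth_ball m)) = emeasure (LL m) (orth_ball m)"
      using ball_fm[of m] by (simp add: emeasure_eq_measure2)
    also have "\<dots> \<le> of_nat (m - 1) * emeasure (LL m) (Fj m 1)" by (rule F1_big[OF m])
    also have "\<dots> = ennreal ((real m - 1) * measure (LL m) (Fj m 1))"
      using F1fm m by (simp add: emeasure_eq_measure2 ennreal_mult ennreal_of_nat_eq_real_of_nat of_nat_diff)
    moreover have "0 \<le> (real m - 1) * measure (LL m) (Fj m 1)" using m by simp
    ultimately show ?thesis by (simp add: ennreal_le_iff)
  qed
  have bp: "measure (LL m) (orth_ball m) > 0"
    using bpos bfin by (simp add: measure_def enn2real_positive_iff less_top zero_less_iff_neq_zero)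
  have m1: "real m - 1 > 0" using m by simp
  have "1 / (real m - 1) \<le> measure (LL m) (Fj m 1) / measure (LL m) (orth_ball m)"
    using big bp m1 by (simp add: field_simps)
  also have "\<dots> \<le> measure (LL m) (orth_ball m \<inter> ?G) / measure (LL m) (orth_ball m)"
    using F1le bp by (simp add: divide_right_mono)
  finally show ?thesis using eq by simp
qed


abbreviation Ua :: "real measure" where "Ua \<equiv> uniform_measure lborel {0..pi/2}"

lemma Ua_prob: "prob_space Ua"
  by (intro prob_space_uniform_measure) (auto simp: emeasure_lborel_Icc_eq)

lemma Ua_I: "measure Ua {pi/6..3*pi/8} = 5/12"
proof -
  have "{0..pi/2} \<inter> {pi/6..3*pi/8} = {pi/6..3*pi/8}" by auto
  then have "measure Ua {pi/6..3*pi/8} = measure lborel {pi/6..3*pi/8} / measure lborel {0..pi/2}"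
    by (subst measure_uniform_measure) (auto simp: emeasure_lborel_Icc_eq)
  also have "\<dots> = (3*pi/8 - pi/6) / (pi/2)" by (simp add: measure_lborel_Icc)
  also have "\<dots> = 5/12" by (simp add: field_simps)
  finally show ?thesis .
qed

definition fmap :: "nat \<Rightarrow> real \<times> (nat \<Rightarrow> real) \<Rightarrow> (nat \<Rightarrow> real)" where
  "fmap m = (\<lambda>(a, v). \<lambda>i\<in>{..<m}. if i = 0 then cos a else sin a * v i)"

lemma profile_eq: "profile_dist m = distr (Ua \<Otimes>\<^sub>M sphere_orth_dist m) (PiM {..<m} (\<lambda>_. lborel)) (fmap m)"
  unfolding profile_dist_def fmap_def ..

lemma sets_UV: "sets (Ua \<Otimes>\<^sub>M sphere_orth_dist m) = sets (lborel \<Otimes>\<^sub>M LL m)"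
  by (intro sets_pair_measure_cong) (simp_all add: sphere_eq)

lemma fmap_meas: "fmap m \<in> (Ua \<Otimes>\<^sub>M sphere_orth_dist m) \<rightarrow>\<^sub>M PiM {..<m} (\<lambda>_. lborel)"
  unfolding measurable_cong_sets[OF sets_UV refl]
proof -
  have "(\<lambda>x. \<lambda>i\<in>{..<m}. if i = 0 then cos (fst x) else sin (fst x) * snd x i) \<in> (lborel \<Otimes>\<^sub>M LL m) \<rightarrow>\<^sub>M PiM {..<m} (\<lambda>_. lborel)"
  proof (rule measurable_restrict)
    fix i assume i: "i \<in> {..<m}"
    show "(\<lambda>x. if i = 0 then cos (fst x) else sin (fst x) * snd x i) \<in> (lborel \<Otimes>\<^sub>M LL m) \<rightarrow>\<^sub>M lborel"
    proof (cases "i = 0")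
      case True then show ?thesis by simp
    next
      case False
      then have [measurable]: "(\<lambda>y. y i) \<in> borel_measurable (LL m)" using i by (intro comp_meas) auto
      show ?thesis using False by simp measurable
    qed
  qed
  then show "fmap m \<in> (lborel \<Otimes>\<^sub>M LL m) \<rightarrow>\<^sub>M PiM {..<m} (\<lambda>_. lborel)"
    by (simp add: fmap_def case_prod_beta')
qed

lemma P_prob: "m \<ge> 2 \<Longrightarrow> prob_space (profile_dist m)"
  unfolding profile_eq
  by (intro prob_space.prob_space_distr prob_space_pair Ua_prob V_prob fmap_meas)

lemma P_A: assumes m: "m \<ge> 2"
  shows "measure (profile_dist m) (Aset m) \<ge> 5 / (12 * (real m - 1))"
proof -
  let ?UV = "Ua \<Otimes>\<^sub>M sphere_orth_dist m"
  let ?I = "{pi/6..3*pi/8}"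
  interpret UV: prob_space ?UV by (intro prob_space_pair Ua_prob V_prob m)
  interpret V: prob_space "sphere_orth_dist m" by (rule V_prob[OF m])
  have spV: "space (sphere_orth_dist m) = space (LL m)" by (simp add: sphere_eq)
  have EvV: "Ev m \<in> sets (sphere_orth_dist m)" using Ev_sets[OF m] by (simp add: sphere_eq)
  have "measure (profile_dist m) (Aset m) = measure ?UV (fmap m -` Aset m \<inter> space ?UV)"
    unfolding profile_eq by (rule measure_distr[OF fmap_meas Aset_sets[OF m]])
  also have "\<dots> \<ge> measure ?UV (?I \<times> Ev m)"
  proof (rule UV.finite_measure_mono)
    show "fmap m -` Aset m \<inter> space ?UV \<in> sets ?UV"
      using fmap_meas Aset_sets[OF m] by (rule measurable_sets)
    show "?I \<times> Ev m \<subseteq> fmap m -` Aset m \<inter> space ?UV"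
    proof safe
      fix a v assume a: "a \<in> ?I" and v: "v \<in> Ev m"
      show "(a, v) \<in> space ?UV" using v by (auto simp: space_pair_measure spV Ev_def)
      have v1: "1 / (real m - 1) \<le> v 1" "v 1 \<le> 1" using v by (auto simp: Ev_def)
      have one: "(1::nat) \<in> {..<m}" "(1::nat) \<noteq> 0" using m by auto
      have R1: "fmap m (a, v) 1 = sin a * v 1" using one by (simp add: fmap_def)
      have R0: "fmap m (a, v) 0 = cos a" using m by (simp add: fmap_def)
      have a0: "0 \<le> a" "a \<le> pi" using a pi_gt_zero by (auto simp: field_simps) 
      have "arccos (cos a) = a" using a0 by (rule arccos_cos)
      then have c0: "arccos (fmap m (a, v) 0) \<le> 3 * pi / 8" using a R0 by simp
      have sa: "1/2 \<le> sin a"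
      proof -
        have "sin (pi/6) \<le> sin a" using a by (intro sin_monotone_2pi_le) (auto simp: field_simps)
        then show ?thesis by (simp add: sin_30)
      qed
      have sa1: "sin a \<le> 1" by simp
      have m1: "real m - 1 \<ge> 1" using m by simp
      have "0.29 / (real m - 1) \<le> 1/2 * (1 / (real m - 1))" using m1 by (simp add: field_simps)
      also have "\<dots> \<le> sin a * v 1" using sa v1 m1 by (intro mult_mono) auto
      finally have lo: "0.29 / (real m - 1) \<le> sin a * v 1" .
      have hi: "sin a * v 1 \<le> 1" using sa sa1 v1 m1
        by (metis dual_order.trans mult_le_one divide_nonneg_nonneg zero_le_one order_trans[OF _ sa] linorder_not_le less_le_not_le  order.trans[of 0 "1/2" "sin a"]) 
      have "0 \<le> 0.29 / (real m - 1)" using m1 by (intro divide_nonneg_nonneg) auto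
      then have "-1 \<le> 0.29 / (real m - 1)" by linarith
      then have c1: "arccos (fmap m (a, v) 1) \<le> arccos (0.29 / (real m - 1))"
        unfolding R1 using lo hi by (intro arccos_le_arccos)
      have "fmap m (a, v) \<in> space (PiM {..<m} (\<lambda>_. lborel))"
        by (auto simp: fmap_def space_PiM)
      then show "(a, v) \<in> fmap m -` Aset m" using c0 c1 by (simp add: Aset_def)
    qed
  qed
  also have "measure ?UV (?I \<times> Ev m) = measure Ua ?I * measure (sphere_orth_dist m) (Ev m)"
    by (simp add: measure_def V.emeasure_pair_measure_Times EvV enn2real_mult)
  also have "\<dots> = 5/12 * measure (sphere_orth_dist m) (Ev m)" by (simp add: Ua_I)
  finally have "5/12 * measure (sphere_orth_dist m) (Ev m) \<le> measure (profile_dist m) (Aset m)" .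
  moreover have "5/12 * (1 / (real m - 1)) \<le> 5/12 * measure (sphere_orth_dist m) (Ev m)"
    using V_Ev[OF m] by (intro mult_left_mono) auto
  moreover have "5 / (12 * (real m - 1)) = 5/12 * (1 / (real m - 1))" by simp
  ultimately show ?thesis by (metis order_trans)
qed



lemma card_as_sum: "real (card {i \<in> {..<n::nat}. Q i}) = (\<Sum>i<n. if Q i then 1 else 0)"
proof -
  have "(\<Sum>i<n. if Q i then 1 else 0 :: real) = (\<Sum>i\<in>{i \<in> {..<n}. Q i}. 1)"
    by (rule sum.inter_filter[symmetric]) simp
  then show ?thesis by simp
qed

lemma cond_iff: assumes m: "m \<ge> 2" and R: "R \<in> space (PiM {..<m} (\<lambda>_. lborel))"
  shows "(angle_m m R D_vec \<le> arccos (0.29 / (real m - 1)) \<and> angle_m m R S_vec \<le> 3 * pi / 8)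
         \<longleftrightarrow> R \<in> Aset m"
  using R by (simp add: angle_m_def inner_D[OF m] inner_S[OF m] Aset_def)

lemma main_n: assumes m: "m \<ge> 2" and nu: "\<nu> > 0" and n: "n \<ge> 1"
  shows "measure (profiles_dist m n)
             {R \<in> space (profiles_dist m n).
                real (N_f m n R) \<ge> (1 - \<nu>) * real n / (4 * (real m - 1))}
           \<ge> 1 - exp (- (2 * \<nu>\<^sup>2 * (1 / (4 * (real m - 1)))\<^sup>2) * real n)"
proof -
  let ?P = "profile_dist m"
  let ?M = "profiles_dist m n"
  let ?I = "{..<n}"
  let ?A = "Aset m"
  define X where "X = (\<lambda>i (R::nat \<Rightarrow> nat \<Rightarrow> real). indicator ?A (R i) :: real)"
  define q where "q = 1 / (4 * (real m - 1))"
  define p where "p = measure ?P ?A"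
  interpret P: prob_space ?P by (rule P_prob[OF m])
  have Msimp: "?M = PiM ?I (\<lambda>_. ?P)" by (simp add: profiles_dist_def)
  interpret M: prob_space ?M unfolding Msimp by (intro prob_space_PiM P.prob_space_axioms)
  have Asets: "?A \<in> sets ?P" using Aset_sets[OF m] by (simp add: profile_eq)
  have spP: "space ?P = space (PiM {..<m} (\<lambda>_. lborel))" by (simp add: profile_eq)
  have comp: "(\<lambda>R. R i) \<in> ?M \<rightarrow>\<^sub>M ?P" if "i \<in> ?I" for i
    unfolding Msimp using that by (rule measurable_component_singleton)
  have Xmeas: "X i \<in> borel_measurable ?M" if "i \<in> ?I" for i
    unfolding X_def using comp[OF that] Asets by measurable
  have ind0: "M.indep_vars (\<lambda>_. ?P) (\<lambda>i R. R i) ?I"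
  proof (rule M.indep_vars_iff_distr_eq_PiM'[THEN iffD2])
    have "0 \<in> ?I" using n by simp
    then show "?I \<noteq> {}" by blast
    show "(\<lambda>R. R i) \<in> ?M \<rightarrow>\<^sub>M ?P" if "i \<in> ?I" for i using comp[OF that] .
    have "distr ?M (PiM ?I (\<lambda>_. ?P)) (\<lambda>x. \<lambda>i\<in>?I. x i) = distr ?M ?M (\<lambda>x. x)"
    proof (rule distr_cong)
      fix x assume "x \<in> space ?M"
      then have "x \<in> PiE ?I (\<lambda>_. space ?P)" by (simp add: Msimp space_PiM)
      then show "(\<lambda>i\<in>?I. x i) = x" by (rule PiE_restrict)
    qed (simp_all add: Msimp)
    also have "\<dots> = PiM ?I (\<lambda>_. ?P)" by (simp add: Msimp)
    also have "\<dots> = PiM ?I (\<lambda>i. distr ?M ?P (\<lambda>x. x i))"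
      by (rule PiM_cong) (auto simp: Msimp intro!: distr_PiM_component[symmetric] P.prob_space_axioms)
    finally show "distr ?M (PiM ?I (\<lambda>_. ?P)) (\<lambda>x. \<lambda>i\<in>?I. x i) = PiM ?I (\<lambda>i. distr ?M ?P (\<lambda>x. x i))" .
  qed
  have ind: "M.indep_vars (\<lambda>_. borel) X ?I"
    unfolding X_def
    by (rule M.indep_vars_compose2[where Y="\<lambda>_. indicator ?A", OF ind0]) (rule borel_measurable_indicator[OF Asets])
  have EX: "M.expectation (X i) = p" if i: "i \<in> ?I" for i
  proof -
    have "M.expectation (X i) = integral\<^sup>L (distr ?M ?P (\<lambda>R. R i)) (indicator ?A)"
      unfolding X_def by (rule integral_distr[symmetric, OF comp[OF i] borel_measurable_indicator[OF Asets]])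
    also have "\<dots> = integral\<^sup>L ?P (indicator ?A)"
      unfolding Msimp distr_PiM_component[of ?I "\<lambda>_. ?P" i, OF P.prob_space_axioms i] ..
    also have "\<dots> = p" using Asets by (simp add: p_def Int_absorb2 sets.sets_into_space)
    finally show ?thesis .
  qed
  have IB: "indep_interval_bounded_random_variables ?M ?I X (\<lambda>_. 0) (\<lambda>_. 1)"
    unfolding indep_interval_bounded_random_variables_def indep_interval_bounded_random_variables_axioms_def
  proof (intro conjI allI impI ballI M.prob_space_axioms ind)
    show "finite ?I" by simp
    fix i assume "i \<in> ?I"
    show "AE x in ?M. X i x \<in> {0..1}" by (simp add: X_def)
  qed
  interpret H: Hoeffding_ineq ?M ?I X "\<lambda>_. 0" "\<lambda>_. 1" "\<Sum>i\<in>?I. M.expectation (X i)"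
    unfolding Hoeffding_ineq_def by (rule IB)
  have mu: "(\<Sum>i\<in>?I. M.expectation (X i)) = real n * p" using EX by simp
  have pq: "p \<ge> q" using P_A[OF m] m unfolding p_def q_def by (simp add: field_simps)
  have q0: "q > 0" using m by (simp add: q_def)
  define \<epsilon> where "\<epsilon> = \<nu> * q * real n"
  have eps0: "\<epsilon> \<ge> 0" using nu q0 by (simp add: \<epsilon>_def)
  have sumpos: "(\<Sum>i\<in>?I. ((\<lambda>_. 1::real) i - (\<lambda>_. 0) i)\<^sup>2) > 0" using n by simp
  have hoe: "M.prob {x \<in> space ?M. (\<Sum>i\<in>?I. X i x) \<le> real n * p - \<epsilon>}
            \<le> exp (- 2 * \<epsilon>\<^sup>2 / (\<Sum>i\<in>?I. ((\<lambda>_. 1::real) i - (\<lambda>_. 0) i)\<^sup>2))"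
    using H.Hoeffding_ineq_le[OF eps0 sumpos] unfolding mu .
  have expeq: "- 2 * \<epsilon>\<^sup>2 / (\<Sum>i\<in>?I. ((\<lambda>_. 1::real) i - (\<lambda>_. 0) i)\<^sup>2)
               = - (2 * \<nu>\<^sup>2 * q\<^sup>2) * real n"
  proof -
    have "(\<Sum>i\<in>?I. ((\<lambda>_. 1::real) i - (\<lambda>_. 0) i)\<^sup>2) = real n" by simp
    moreover have "real n > 0" using n by simp
    ultimately show ?thesis by (simp add: \<epsilon>_def power2_eq_square)
  qed
  define thr where "thr = (1 - \<nu>) * real n / (4 * (real m - 1))"
  have den: "4 * (real m - 1) \<noteq> 0" using m by simp
  have "thr = (real n - \<nu> * real n) / (4 * (real m - 1))" by (simp add: thr_def algebra_simps)
  also have "\<dots> = real n * q - \<epsilon>" by (simp add: q_def \<epsilon>_def diff_divide_distrib)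
  finally have thr_eq: "thr = real n * q - \<epsilon>" .
  have Nf: "real (N_f m n R) = (\<Sum>i\<in>?I. X i R)" if R: "R \<in> space ?M" for R
  proof -
    have Ri: "R i \<in> space (PiM {..<m} (\<lambda>_. lborel))" if i: "i \<in> ?I" for i
    proof -
      have "R \<in> PiE ?I (\<lambda>_. space ?P)" using R by (simp add: Msimp space_PiM)
      then have "R i \<in> space ?P" using i by (rule PiE_mem)
      then show ?thesis by (simp add: spP)
    qed
    have "real (N_f m n R) = (\<Sum>i<n. if (angle_m m (R i) D_vec \<le> arccos (0.29 / (real m - 1)) \<and>
       angle_m m (R i) S_vec \<le> 3 * pi / 8) then 1 else 0)"
      unfolding N_f_def by (rule card_as_sum)
    also have "\<dots> = (\<Sum>i\<in>?I. X i R)"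
    proof (rule sum.cong)
      fix i assume i: "i \<in> ?I"
      show "(if (angle_m m (R i) D_vec \<le> arccos (0.29 / (real m - 1)) \<and>
       angle_m m (R i) S_vec \<le> 3 * pi / 8) then 1 else 0) = X i R"
        unfolding cond_iff[OF m Ri[OF i]] X_def indicator_def by simp
    qed simp
    finally show ?thesis .
  qed
  let ?S = "{R \<in> space ?M. real (N_f m n R) \<ge> thr}"
  let ?C = "{x \<in> space ?M. (\<Sum>i\<in>?I. X i x) \<le> real n * p - \<epsilon>}"
  have Seq: "?S = {R \<in> space ?M. (\<Sum>i\<in>?I. X i R) \<ge> thr}" using Nf by auto
  have sumX[measurable]: "(\<lambda>R. \<Sum>i\<in>?I. X i R) \<in> borel_measurable ?M"
    by (rule borel_measurable_sum) (rule Xmeas)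
  have Ssets: "?S \<in> sets ?M" unfolding Seq by measurable
  have Csets: "?C \<in> sets ?M" by measurable
  have sub: "space ?M - ?S \<subseteq> ?C"
  proof
    fix R assume R: "R \<in> space ?M - ?S"
    then have "(\<Sum>i\<in>?I. X i R) < thr" using Nf by auto
    also have "thr \<le> real n * p - \<epsilon>" unfolding thr_eq using pq by (simp add: mult_left_mono)
    finally show "R \<in> ?C" using R by auto
  qed
  have "M.prob (space ?M - ?S) \<le> M.prob ?C" using sub Csets by (rule M.finite_measure_mono)
  also have "\<dots> \<le> exp (- (2 * \<nu>\<^sup>2 * q\<^sup>2) * real n)" using hoe expeq by simp
  finally have "1 - M.prob ?S \<le> exp (- (2 * \<nu>\<^sup>2 * q\<^sup>2) * real n)"
    using M.prob_compl[OF Ssets] by simp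
  then show ?thesis by (simp add: thr_def q_def)
qed

theorem lemma1:
  fixes m :: nat and \<nu> :: real
  assumes "m \<ge> 2" and "\<nu> > 0"
  shows "\<exists>c>0. \<forall>\<^sub>F n in sequentially.
           measure (profiles_dist m n)
             {R \<in> space (profiles_dist m n).
                real (N_f m n R) \<ge> (1 - \<nu>) * real n / (4 * (real m - 1))}
           \<ge> 1 - exp (- c * real n)"
proof (intro exI conjI)
  show "2 * \<nu>\<^sup>2 * (1 / (4 * (real m - 1)))\<^sup>2 > 0" using assms by simp
  show "\<forall>\<^sub>F n in sequentially.
           measure (profiles_dist m n)
             {R \<in> space (profiles_dist m n).
                real (N_f m n R) \<ge> (1 - \<nu>) * real n / (4 * (real m - 1))}
           \<ge> 1 - exp (- (2 * \<nu>\<^sup>2 * (1 / (4 * (real m - 1)))\<^sup>2) * real n)"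
    using eventually_ge_at_top[of 1] by eventually_elim (rule main_n[OF assms])
qed

end
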